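(* Let $\mathcal{R}$ be a tolerance relation on $X=\{1,\dots,n\}$ whose graph $G(\mathcal{R})$ is chordal, and let $\mathcal{C}$ be the set of maximal cliques of $G(\mathcal{R})$. Then the map $$\Phi: E(\mathcal{R})^d\to \bigoplus_{C\in\mathcal{C}} M_{|C|}(\mathbb{C}),\qquad (x_{ij})\mapsto \big((x_{ij})_{i,j\in C}\big)_{C\in\mathcal{C}}$$ is a complete order embedding, i.e. for every $m$ the map $\Phi_m$ (entrywise application of $\Phi$) is injective and an element $M\in M_m(E(\mathcal{R})^d)$ lies in $M_m(E(\mathcal{R})^d)_+$ if and only if $\Phi_m(M)$ is positive in the $C^*$-algebra $M_m\big(\bigoplus_{C\in\mathcal{C}}M_{|C|}(\mathbb{C})\big)$.
   Context: A tolerance relation on $X=\{1,\dots,n\}$ is a reflexive symmetric relation $\mathcal{R}\subseteq X\times X$; its graph $G(\mathcal{R})$ has vertex set $X$ and an edge between distinct $i,j$ iff $(i,j)\in\mathcal{R}$. A graph is chordal if every cycle of length at least 4 has a chord (an edge joining two vertices not adjacent in the cycle). The operator system $E(\mathcal{R})=\{(x_{ij})\in M_n(\mathbb{C})\mid x_{ij}=0 \text{ if }(i,j)\notin\mathcal{R}\}$ carries the matrix order inherited from $M_n(\mathbb{C})$. Its dual operator system $E(\mathcal{R})^d$ is identified (via the Hilbert–Schmidt pairing) with the $*$-vector space $E(\mathcal{R})$ (usual conjugate transpose) equipped with the matrix order $$M_m(E(\mathcal{R})^d)_+=\{M\in M_m(E(\mathcal{R}))\mid \exists N\in M_m(E(\mathcal{R})^\perp),\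 M+N\in M_{mn}(\mathbb{C})_+\},$$ where $E(\mathcal{R})^\perp=\{(y_{ij})\in M_n(\mathbb{C})\mid y_{ij}=0\text{ for }(i,j)\in\mathcal{R}\}$ is the Hilbert–Schmidt orthogonal complement and $M_m(M_n(\mathbb{C}))\cong M_{mn}(\mathbb{C})$ canonically; the identity matrix serves as matrix order unit. In the direct sum, matrices in the $C$-component are indexed by $C$. *)

theory Defs
  imports Complex_Main
begin

definition psd_on :: "'i set \<Rightarrow> ('i \<Rightarrow> 'i \<Rightarrow> complex) \<Rightarrow> bool" where
  "psd_on I A \<longleftrightarrow> (\<forall>x\<in>I. \<forall>y\<in>I. A y x = cnj (A x y)) \<and>
     (\<forall>v. Im (\<Sum>x\<in>I. \<Sum>y\<in>I. cnj (v x) * A x y * v y) = 0 \<and>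
          0 \<le> Re (\<Sum>x\<in>I. \<Sum>y\<in>I. cnj (v x) * A x y * v y))"

definition tolerance_relation :: "nat \<Rightarrow> (nat \<times> nat) set \<Rightarrow> bool" where
  "tolerance_relation n R \<longleftrightarrow> R \<subseteq> {1..n} \<times> {1..n} \<and> refl_on {1..n} R \<and> sym R"

definition graph_adj :: "(nat \<times> nat) set \<Rightarrow> nat \<Rightarrow> nat \<Rightarrow> bool" where
  "graph_adj R i j \<longleftrightarrow> i \<noteq> j \<and> (i, j) \<in> R"

definition is_cycle :: "(nat \<times> nat) set \<Rightarrow> nat list \<Rightarrow> bool" where
  "is_cycle R vs \<longleftrightarrow> distinct vs \<and> 3 \<le> length vs \<and>
     (\<forall>i<length vs. graph_adj R (vs ! i) (vs ! ((i + 1) mod length vs)))"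

definition has_chord :: "(nat \<times> nat) set \<Rightarrow> nat list \<Rightarrow> bool" where
  "has_chord R vs \<longleftrightarrow> (\<exists>i<length vs. \<exists>j<length vs. i \<noteq> j \<and>
      j \<noteq> (i + 1) mod length vs \<and> i \<noteq> (j + 1) mod length vs \<and>
      graph_adj R (vs ! i) (vs ! j))"

definition chordal :: "nat \<Rightarrow> (nat \<times> nat) set \<Rightarrow> bool" where
  "chordal n R \<longleftrightarrow> (\<forall>vs. set vs \<subseteq> {1..n} \<longrightarrow> is_cycle R vs \<longrightarrow> 4 \<le> length vs \<longrightarrow> has_chord R vs)"

definition is_clique :: "(nat \<times> nat) set \<Rightarrow> nat set \<Rightarrow> bool" where
  "is_clique R C \<longleftrightarrow> (\<forall>i\<in>C. \<forall>j\<in>C. i \<noteq> j \<longrightarrow> graph_adj R i j)"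

definition maximal_cliques :: "nat \<Rightarrow> (nat \<times> nat) set \<Rightarrow> nat set set" where
  "maximal_cliques n R = {C. C \<subseteq> {1..n} \<and> is_clique R C \<and>
      (\<forall>D. C \<subseteq> D \<and> D \<subseteq> {1..n} \<and> is_clique R D \<longrightarrow> D = C)}"

text \<open>Elements of M_m(M_n): M k l i j is entry (i,j) of block (k,l); it corresponds to the
  entry ((k,i),(l,j)) of M_{mn} under M_m(M_n) = M_{mn}.\<close>

definition Mm_E :: "nat \<Rightarrow> (nat \<times> nat) set \<Rightarrow> nat \<Rightarrow> (nat \<Rightarrow> nat \<Rightarrow> nat \<Rightarrow> nat \<Rightarrow> complex) set" where
  "Mm_E n R m = {M. \<forall>k l i j. M k l i j \<noteq> 0 \<longrightarrow> k < m \<and> l < m \<and> i \<in> {1..n} \<and> j \<in> {1..n} \<and> (i, j) \<in> R}"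

definition Mm_Eperp :: "nat \<Rightarrow> (nat \<times> nat) set \<Rightarrow> nat \<Rightarrow> (nat \<Rightarrow> nat \<Rightarrow> nat \<Rightarrow> nat \<Rightarrow> complex) set" where
  "Mm_Eperp n R m = {N. \<forall>k l i j. N k l i j \<noteq> 0 \<longrightarrow> k < m \<and> l < m \<and> i \<in> {1..n} \<and> j \<in> {1..n} \<and> (i, j) \<notin> R}"

definition dual_pos :: "nat \<Rightarrow> (nat \<times> nat) set \<Rightarrow> nat \<Rightarrow> (nat \<Rightarrow> nat \<Rightarrow> nat \<Rightarrow> nat \<Rightarrow> complex) \<Rightarrow> bool" where
  "dual_pos n R m M \<longleftrightarrow> M \<in> Mm_E n R m \<and>
     (\<exists>N \<in> Mm_Eperp n R m. psd_on ({..<m} \<times> {1..n}) (\<lambda>(k, i) (l, j). M k l i j + N k l i j))"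

text \<open>The map Phi into the direct sum, an element of which is a family C \<mapsto> (matrix indexed by C).\<close>
definition Phi :: "nat \<Rightarrow> (nat \<times> nat) set \<Rightarrow> (nat \<Rightarrow> nat \<Rightarrow> complex) \<Rightarrow> (nat set \<Rightarrow> nat \<Rightarrow> nat \<Rightarrow> complex)" where
  "Phi n R x = (\<lambda>C i j. if C \<in> maximal_cliques n R \<and> i \<in> C \<and> j \<in> C then x i j else 0)"

definition Phi_m :: "nat \<Rightarrow> (nat \<times> nat) set \<Rightarrow> nat \<Rightarrow> (nat \<Rightarrow> nat \<Rightarrow> nat \<Rightarrow> nat \<Rightarrow> complex)
     \<Rightarrow> (nat \<Rightarrow> nat \<Rightarrow> nat set \<Rightarrow> nat \<Rightarrow> nat \<Rightarrow> complex)" where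
  "Phi_m n R m M = (\<lambda>k l. if k < m \<and> l < m then Phi n R (M k l) else (\<lambda>_ _ _. 0))"

text \<open>Positivity in the C*-algebra M_m(\<Oplus>_C M_|C|), realised concretely as block-diagonal
  matrices inside M_m(M_N) with N = \<Sum>_C |C|, indices (k,(C,i)).\<close>
definition dsum_pos :: "nat \<Rightarrow> (nat \<times> nat) set \<Rightarrow> nat \<Rightarrow> (nat \<Rightarrow> nat \<Rightarrow> nat set \<Rightarrow> nat \<Rightarrow> nat \<Rightarrow> complex) \<Rightarrow> bool" where
  "dsum_pos n R m P \<longleftrightarrow>
     psd_on {(k, C, i). k < m \<and> C \<in> maximal_cliques n R \<and> i \<in> C}
       (\<lambda>(k, C, i) (l, D, j). if C = D then P k l C i j else 0)"

end

theory Submission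
  imports Defs
begin

definition qf :: "'i set \<Rightarrow> ('i \<Rightarrow> 'i \<Rightarrow> complex) \<Rightarrow> ('i \<Rightarrow> complex) \<Rightarrow> complex" where
  "qf I A v = (\<Sum>x\<in>I. \<Sum>y\<in>I. cnj (v x) * A x y * v y)"

definition herm :: "'i set \<Rightarrow> ('i \<Rightarrow> 'i \<Rightarrow> complex) \<Rightarrow> bool" where
  "herm I A \<longleftrightarrow> (\<forall>x\<in>I. \<forall>y\<in>I. A y x = cnj (A x y))"

lemma psd_on_iff: "psd_on I A \<longleftrightarrow> herm I A \<and> (\<forall>v. Im (qf I A v) = 0 \<and> 0 \<le> Re (qf I A v))"
  unfolding psd_on_def herm_def qf_def by blast

lemma qf_restrict:
  assumes "finite I" "J \<subseteq> I"
  shows "qf I A (\<lambda>x. if x \<in> J then v x else 0) = qf J A v"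
proof -
  have "qf I A (\<lambda>x. if x \<in> J then v x else 0) =
     (\<Sum>x\<in>I. if x \<in> J then (\<Sum>y\<in>I. if y \<in> J then cnj (v x) * A x y * v y else 0) else 0)"
    unfolding qf_def by (intro sum.cong refl) (auto intro!: sum.cong)
  also have "\<dots> = qf J A v"
    unfolding qf_def using assms
    by (simp add: sum.inter_restrict[symmetric] Int_absorb1)
  finally show ?thesis .
qed

lemma psd_restrict:
  assumes "finite I" "J \<subseteq> I" "psd_on I A"
  shows "psd_on J A"
  using assms unfolding psd_on_iff
  by (auto simp: herm_def) (metis qf_restrict assms(1,2))+

lemma psd_cong:
  assumes "psd_on I A" "\<And>x y. x \<in> I \<Longrightarrow> y \<in> I \<Longrightarrow> A x y = B x y"
  shows "psd_on I B"
proof -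
  have "qf I A v = qf I B v" for v unfolding qf_def using assms(2) by (auto intro!: sum.cong)
  moreover have "herm I B"
  proof -
    have "herm I A" using assms(1) psd_on_iff by blast
    then show ?thesis using assms(2) unfolding herm_def by metis
  qed
  ultimately show ?thesis using assms(1) unfolding psd_on_iff by metis
qed

lemma qf_reindex:
  assumes "inj_on f I"
  shows "qf (f ` I) A w = qf I (\<lambda>x y. A (f x) (f y)) (w \<circ> f)"
  unfolding qf_def using assms by (simp add: sum.reindex)

lemma psd_reindex:
  assumes "inj_on f I"
  shows "psd_on (f ` I) A \<longleftrightarrow> psd_on I (\<lambda>x y. A (f x) (f y))"
proof
  assume a: "psd_on (f ` I) A"
  show "psd_on I (\<lambda>x y. A (f x) (f y))"
    unfolding psd_on_iff
  proof (intro conjI allI)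
    have "herm (f ` I) A" using a psd_on_iff by blast
    then show "herm I (\<lambda>x y. A (f x) (f y))" unfolding herm_def by blast
    fix v
    have "qf I (\<lambda>x y. A (f x) (f y)) v = qf I (\<lambda>x y. A (f x) (f y)) ((v \<circ> inv_into I f) \<circ> f)"
      unfolding qf_def using assms by (intro sum.cong refl) (auto intro!: sum.cong)
    also have "\<dots> = qf (f ` I) A (v \<circ> inv_into I f)" using qf_reindex[OF assms] by metis
    finally show "Im (qf I (\<lambda>x y. A (f x) (f y)) v) = 0" "0 \<le> Re (qf I (\<lambda>x y. A (f x) (f y)) v)"
      using a unfolding psd_on_iff by auto
  qed
next
  assume a: "psd_on I (\<lambda>x y. A (f x) (f y))"
  show "psd_on (f ` I) A"
    unfolding psd_on_iff
  proof (intro conjI allI)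
    have "herm I (\<lambda>x y. A (f x) (f y))" using a psd_on_iff by blast
    then show "herm (f ` I) A" unfolding herm_def by blast
    fix v
    show "Im (qf (f ` I) A v) = 0" "0 \<le> Re (qf (f ` I) A v)"
      using a qf_reindex[OF assms] unfolding psd_on_iff by auto
  qed
qed

lemma psd_diag:
  assumes "finite I" "psd_on I A" "s \<in> I"
  shows "Im (A s s) = 0 \<and> 0 \<le> Re (A s s)"
proof -
  have "qf I A (\<lambda>x. if x \<in> {s} then 1 else 0) = qf {s} A (\<lambda>_. 1)"
    using qf_restrict[of I "{s}" A "\<lambda>_. 1"] assms by auto
  also have "\<dots> = A s s" unfolding qf_def by simp
  finally show ?thesis using assms(2) unfolding psd_on_iff by metis
qed

lemma psd_zero_col:
  assumes "finite I" "psd_on I A" "s \<in> I" "A s s = 0" "x \<in> I"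
  shows "A x s = 0"
proof (rule ccontr)
  assume ne: "A x s \<noteq> 0"
  then have xs: "x \<noteq> s" using assms by auto
  have "herm I A" using assms(2) psd_on_iff by blast
  then have h: "A s x = cnj (A x s)" using assms(3,5) unfolding herm_def by blast
  define c where "c = A x s"
  define t :: real where "t = (Re (A x x) + 1) / (cmod c)^2"
  define \<mu> where "\<mu> = - of_real t * cnj c"
  have "qf I A (\<lambda>y. if y \<in> {x, s} then (if y = x then 1 else \<mu>) else 0) = qf {x,s} A (\<lambda>y. if y = x then 1 else \<mu>)"
    using qf_restrict[of I "{x,s}"] assms by auto
  also have "\<dots> = A x x + A x s * \<mu> + cnj \<mu> * A s x"
    unfolding qf_def using xs assms(4) by simp
  finally have q: "qf I A (\<lambda>y. if y \<in> {x, s} then (if y = x then 1 else \<mu>) else 0) = A x x + c * \<mu> + cnj (c * \<mu>)"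
    using h c_def by simp
  have cpos: "(cmod c)^2 > 0" using ne c_def by simp
  have "c * \<mu> = - of_real (t * (cmod c)^2)"
  proof -
    have e: "c * cnj c = of_real ((cmod c)^2)" by (metis complex_norm_square of_real_power)
    have "c * \<mu> = - of_real t * (c * cnj c)" unfolding \<mu>_def by (simp add: ac_simps)
    then show ?thesis using e by simp
  qed
  also have "t * (cmod c)^2 = Re (A x x) + 1" unfolding t_def using cpos by simp
  finally have cm: "c * \<mu> = - of_real (Re (A x x) + 1)" .
  have "0 \<le> Re (A x x)" using psd_diag[OF assms(1,2,5)] by simp
  moreover have "0 \<le> Re (A x x + c * \<mu> + cnj (c * \<mu>))" using q assms(2) unfolding psd_on_iff by metis
  ultimately show False using cm by simp
qed


definition schur :: "('i \<Rightarrow> 'i \<Rightarrow> complex) \<Rightarrow> 'i \<Rightarrow> 'i \<Rightarrow> 'i \<Rightarrow> complex" where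
  "schur A s = (\<lambda>x y. A x y - A x s * A s y / A s s)"

lemma qf_split:
  assumes "finite I" "s \<in> I" "herm I A"
  shows "qf I A v = cnj (v s) * A s s * v s + cnj (v s) * (\<Sum>y\<in>I-{s}. A s y * v y)
      + cnj (\<Sum>y\<in>I-{s}. A s y * v y) * v s + qf (I - {s}) A v"
proof -
  have r: "\<And>g. sum g I = g s + sum g (I - {s})" using sum.remove[OF assms(1,2)] by blast
  have "qf I A v = (\<Sum>x\<in>I. cnj (v x) * A x s * v s + (\<Sum>y\<in>I-{s}. cnj (v x) * A x y * v y))"
    unfolding qf_def by (intro sum.cong refl) (rule r)
  also have "\<dots> = (cnj (v s) * A s s * v s + (\<Sum>y\<in>I-{s}. cnj (v s) * A s y * v y))
      + (\<Sum>x\<in>I-{s}. cnj (v x) * A x s * v s + (\<Sum>y\<in>I-{s}. cnj (v x) * A x y * v y))"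
    by (rule r)
  also have "(\<Sum>x\<in>I-{s}. cnj (v x) * A x s * v s + (\<Sum>y\<in>I-{s}. cnj (v x) * A x y * v y))
      = (\<Sum>x\<in>I-{s}. cnj (v x) * A x s * v s) + qf (I - {s}) A v"
    unfolding qf_def by (rule sum.distrib)
  also have "(\<Sum>y\<in>I-{s}. cnj (v s) * A s y * v y) = cnj (v s) * (\<Sum>y\<in>I-{s}. A s y * v y)"
    by (simp add: sum_distrib_left mult.assoc)
  also have "(\<Sum>x\<in>I-{s}. cnj (v x) * A x s * v s) = cnj (\<Sum>y\<in>I-{s}. A s y * v y) * v s"
  proof -
    have "(\<Sum>x\<in>I-{s}. cnj (v x) * A x s * v s) = (\<Sum>x\<in>I-{s}. cnj (A s x * v x) * v s)"
    proof (intro sum.cong refl)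
      fix x assume x: "x \<in> I - {s}"
      have e: "A x s = cnj (A s x)" using assms(2,3) x unfolding herm_def by blast
      show "cnj (v x) * A x s * v s = cnj (A s x * v x) * v s" by (simp add: e mult.commute)
    qed
    also have "\<dots> = (\<Sum>x\<in>I-{s}. cnj (A s x * v x)) * v s" by (simp add: sum_distrib_right)
    finally have "(\<Sum>x\<in>I-{s}. cnj (v x) * A x s * v s) = (\<Sum>x\<in>I-{s}. cnj (A s x * v x)) * v s" .
    then show ?thesis by simp
  qed
  finally show ?thesis by (simp add: algebra_simps)
qed

lemma qf_schur_part:
  assumes that: "herm (insert s J) A"
  shows "qf J (schur A s) v = qf J A v - cnj (\<Sum>y\<in>J. A s y * v y) * (\<Sum>y\<in>J. A s y * v y) / A s s"
proof -
  have "qf J (schur A s) v = qf J A v - (\<Sum>x\<in>J. \<Sum>y\<in>J. cnj (v x) * A x s * (A s y * v y) / A s s)"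
    unfolding qf_def schur_def by (simp add: sum_subtractf algebra_simps)
  also have "(\<Sum>x\<in>J. \<Sum>y\<in>J. cnj (v x) * A x s * (A s y * v y) / A s s)
     = (\<Sum>x\<in>J. cnj (v x) * A x s) * (\<Sum>y\<in>J. A s y * v y) / A s s"
    by (simp add: sum_product sum_divide_distrib mult.assoc)
  also have "(\<Sum>x\<in>J. cnj (v x) * A x s) = cnj (\<Sum>y\<in>J. A s y * v y)"
  proof -
    have "(\<Sum>x\<in>J. cnj (v x) * A x s) = (\<Sum>x\<in>J. cnj (A s x * v x))"
    proof (intro sum.cong refl)
      fix x assume x: "x \<in> J"
      have e: "A x s = cnj (A s x)" using that x unfolding herm_def by blast
      show "cnj (v x) * A x s = cnj (A s x * v x)" by (simp add: e mult.commute)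
    qed
    then show ?thesis by simp
  qed
  finally show ?thesis .
qed

lemma aux_id: "(d::complex) \<noteq> 0 \<Longrightarrow> d * (x + b / d) * (y + c / d) = x * d * y + x * c + b * y + b * c / d"
  by (simp add: divide_simps, algebra)

lemma qf_schur:
  assumes "finite I" "s \<in> I" "herm I A" "cnj (A s s) = A s s" and that: "A s s \<noteq> 0"
  shows "qf I A v = A s s * cnj (v s + (\<Sum>y\<in>I-{s}. A s y * v y) / A s s) * (v s + (\<Sum>y\<in>I-{s}. A s y * v y) / A s s)
     + qf (I - {s}) (schur A s) v"
    (is "_ = ?d * cnj (v s + ?a / ?d) * (v s + ?a / ?d) + _")
proof -
  have ins: "insert s (I - {s}) = I" using assms by auto
  have "qf I A v = cnj (v s) * ?d * v s + cnj (v s) * ?a + cnj ?a * v s + qf (I - {s}) A v"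
    using qf_split[OF assms(1-3)] by simp
  moreover have "qf (I - {s}) (schur A s) v = qf (I - {s}) A v - cnj ?a * ?a / ?d"
    using qf_schur_part[where J="I - {s}" and s=s and A=A and v=v] assms ins by simp
  moreover have "?d * cnj (v s + ?a / ?d) * (v s + ?a / ?d) = cnj (v s) * ?d * v s + cnj (v s) * ?a + cnj ?a * v s + cnj ?a * ?a / ?d"
  proof -
    have c: "cnj (v s + ?a / ?d) = cnj (v s) + cnj ?a / ?d" using assms(4) by simp
    show ?thesis unfolding c using aux_id[OF that] by simp
  qed
  ultimately show ?thesis by simp
qed

lemma qf_zero_row:
  assumes "finite I" "s \<in> I" "herm I A" "\<forall>x\<in>I. A x s = 0"
  shows "qf I A v = qf (I - {s}) (schur A s) v"
proof -
  have "\<forall>y\<in>I. A s y = 0" using assms unfolding herm_def by (metis complex_cnj_zero)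
  then have "(\<Sum>y\<in>I-{s}. A s y * v y) = 0" by simp
  moreover have "schur A s = A" unfolding schur_def using assms by (auto simp: fun_eq_iff)
  ultimately show ?thesis using qf_split[OF assms(1-3), of v] assms by simp
qed

lemma herm_schur:
  assumes "herm I A" "s \<in> I" "cnj (A s s) = A s s"
  shows "herm (I - {s}) (schur A s)"
  unfolding herm_def
proof (intro ballI)
  fix x y assume xy: "x \<in> I - {s}" "y \<in> I - {s}"
  have h1: "A y x = cnj (A x y)" "A y s = cnj (A s y)" "A s x = cnj (A x s)"
    using assms(1,2) xy unfolding herm_def by blast+
  show "schur A s y x = cnj (schur A s x y)"
  proof -
    have "cnj (A x y - A x s * A s y / A s s) = cnj (A x y) - cnj (A x s) * cnj (A s y) / cnj (A s s)"
      by (simp only: complex_cnj_diff complex_cnj_mult complex_cnj_divide)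
    then show ?thesis unfolding schur_def h1 assms(3) by (simp only: mult.commute)
  qed
qed

lemma psd_schur:
  assumes "finite I" "s \<in> I" "herm I A" "Im (A s s) = 0"
    and cond: "Re (A s s) > 0 \<or> (\<forall>x\<in>I. A x s = 0)"
  shows "psd_on I A \<longleftrightarrow> psd_on (I - {s}) (schur A s)"
proof -
  have cd: "cnj (A s s) = A s s" using assms(4) by (simp add: complex_eq_iff)
  have hs: "herm (I - {s}) (schur A s)" using herm_schur[OF assms(3,2) cd] .
  show ?thesis
  proof (cases "Re (A s s) > 0")
    case True
    then have nz: "A s s \<noteq> 0" by auto
    define d where "d = A s s"
    have dr: "d = of_real (Re (A s s))" using assms(4) unfolding d_def by (simp add: complex_eq_iff)
    let ?a = "\<lambda>v. (\<Sum>y\<in>I-{s}. A s y * v y)"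
    have key: "qf I A v = d * cnj (v s + ?a v / d) * (v s + ?a v / d) + qf (I - {s}) (schur A s) v" for v
      using qf_schur[OF assms(1-3) cd nz] unfolding d_def by blast
    have sq: "Im (d * cnj z * z) = 0 \<and> 0 \<le> Re (d * cnj z * z)" for z
    proof -
      have "d * cnj z * z = of_real (Re (A s s) * (cmod z)^2)"
        using dr by (simp add: complex_norm_square[symmetric] mult.commute mult.left_commute)
      then show ?thesis using True by simp
    qed
    show ?thesis
    proof
      assume p: "psd_on I A"
      show "psd_on (I - {s}) (schur A s)" unfolding psd_on_iff
      proof (intro conjI allI hs)
        fix v
        define w where "w = v(s := - ?a v / d)"
        have aw: "?a w = ?a v" unfolding w_def by (intro sum.cong) auto
        have "qf (I - {s}) (schur A s) w = qf (I - {s}) (schur A s) v"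
          unfolding qf_def w_def by (intro sum.cong) auto
        moreover have "qf I A w = qf (I - {s}) (schur A s) w"
          using key[of w] aw unfolding w_def by simp
        ultimately show "Im (qf (I - {s}) (schur A s) v) = 0" "0 \<le> Re (qf (I - {s}) (schur A s) v)"
          using p unfolding psd_on_iff by metis+
      qed
    next
      assume p: "psd_on (I - {s}) (schur A s)"
      show "psd_on I A" unfolding psd_on_iff
      proof (intro conjI allI assms(3))
        fix v
        show "Im (qf I A v) = 0" "0 \<le> Re (qf I A v)"
          using key[of v] sq[of "v s + ?a v / d"] p unfolding psd_on_iff by auto
      qed
    qed
  next
    case False
    then have z: "\<forall>x\<in>I. A x s = 0" using cond by auto
    show ?thesis unfolding psd_on_iff using qf_zero_row[OF assms(1-3) z] hs assms(3) by auto
  qed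
qed


lemma qf_union:
  assumes "finite J" "finite K" "J \<inter> K = {}"
    and "\<And>x y. x \<in> J \<Longrightarrow> y \<in> K \<Longrightarrow> A x y = 0" "\<And>x y. x \<in> K \<Longrightarrow> y \<in> J \<Longrightarrow> A x y = 0"
  shows "qf (J \<union> K) A v = qf J A v + qf K A v"
proof -
  have "qf (J \<union> K) A v = (\<Sum>x\<in>J. \<Sum>y\<in>J \<union> K. cnj (v x) * A x y * v y) + (\<Sum>x\<in>K. \<Sum>y\<in>J \<union> K. cnj (v x) * A x y * v y)"
    unfolding qf_def using assms(1-3) by (rule sum.union_disjoint)
  also have "(\<Sum>x\<in>J. \<Sum>y\<in>J \<union> K. cnj (v x) * A x y * v y) = qf J A v"
    unfolding qf_def using assms by (auto simp: sum.union_disjoint intro!: sum.cong)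
  also have "(\<Sum>x\<in>K. \<Sum>y\<in>J \<union> K. cnj (v x) * A x y * v y) = qf K A v"
    unfolding qf_def using assms by (auto simp: sum.union_disjoint intro!: sum.cong)
  finally show ?thesis .
qed

lemma psd_union:
  assumes "finite J" "finite K" "J \<inter> K = {}" "psd_on J A" "psd_on K A"
    and "\<And>x y. x \<in> J \<Longrightarrow> y \<in> K \<Longrightarrow> A x y = 0" "\<And>x y. x \<in> K \<Longrightarrow> y \<in> J \<Longrightarrow> A x y = 0"
  shows "psd_on (J \<union> K) A"
proof -
  have hJ: "herm J A" and hK: "herm K A" using assms(4,5) psd_on_iff by blast+
  have "herm (J \<union> K) A" unfolding herm_def
  proof (intro ballI)
    fix x y assume "x \<in> J \<union> K" "y \<in> J \<union> K"
    then show "A y x = cnj (A x y)"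
      using hJ hK assms(6,7) unfolding herm_def by (metis Un_iff complex_cnj_zero)
  qed
  moreover have "Im (qf (J \<union> K) A v) = 0 \<and> 0 \<le> Re (qf (J \<union> K) A v)" for v
    using qf_union[OF assms(1-3,6,7)] assms(4,5) unfolding psd_on_iff by simp
  ultimately show ?thesis unfolding psd_on_iff by blast
qed

lemma two_block_aux:
  fixes IS :: "'i set"
  assumes "finite IS"
  shows "finite IA \<Longrightarrow> finite IB \<Longrightarrow> IA \<inter> IS = {} \<Longrightarrow> IB \<inter> IS = {} \<Longrightarrow> IA \<inter> IB = {} \<Longrightarrow>
    psd_on (IA \<union> IS) Q \<Longrightarrow> psd_on (IS \<union> IB) P \<Longrightarrow> (\<forall>x\<in>IS. \<forall>y\<in>IS. Q x y = P x y) \<Longrightarrow>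
    \<exists>W. psd_on (IA \<union> IS \<union> IB) W \<and> (\<forall>x\<in>IA \<union> IS. \<forall>y\<in>IA \<union> IS. W x y = Q x y)
        \<and> (\<forall>x\<in>IS \<union> IB. \<forall>y\<in>IS \<union> IB. W x y = P x y)"
  using assms
proof (induction IS arbitrary: Q P rule: finite_induct)
  case empty
  define W where "W = (\<lambda>x y. if x \<in> IA \<and> y \<in> IA then Q x y else if x \<in> IB \<and> y \<in> IB then P x y else 0)"
  have "psd_on IA Q" using empty by simp
  then have "psd_on IA W" by (rule psd_cong) (simp add: W_def)
  moreover have "psd_on IB P" using empty by simp
  then have "psd_on IB W" by (rule psd_cong) (use empty in \<open>auto simp: W_def\<close>)
  ultimately have "psd_on (IA \<union> IB) W"
    using empty by (intro psd_union) (auto simp: W_def)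
  then show ?case using empty by (intro exI[of _ W]) (auto simp: W_def)
next
  case (insert s S)
  define I1 where "I1 = IA \<union> insert s S"
  define I2 where "I2 = insert s S \<union> IB"
  define I where "I = IA \<union> insert s S \<union> IB"
  have fin1: "finite I1" "finite I2" "finite I" using insert.prems insert.hyps by (auto simp: I1_def I2_def I_def)
  have s1: "s \<in> I1" "s \<in> I2" "s \<in> I" by (auto simp: I1_def I2_def I_def)
  have pQ: "psd_on I1 Q" and pP: "psd_on I2 P" using insert by (auto simp: I1_def I2_def)
  have hQ: "herm I1 Q" and hP: "herm I2 P" using pQ pP psd_on_iff by blast+
  have agr: "\<forall>x\<in>insert s S. \<forall>y\<in>insert s S. Q x y = P x y" using insert by blast
  define d where "d = Q s s"
  have dP: "P s s = d" using agr d_def by auto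
  have dQ: "Q s s = d" using d_def by simp
  have dim: "Im d = 0" "0 \<le> Re d" using psd_diag[OF fin1(1) pQ s1(1)] d_def by auto
  have cd: "cnj d = d" using dim by (simp add: complex_eq_iff)
  have condQ: "Re (Q s s) > 0 \<or> (\<forall>x\<in>I1. Q x s = 0)"
  proof (cases "Re d > 0")
    case False
    then have "d = 0" using dim by (simp add: complex_eq_iff)
    then show ?thesis using psd_zero_col[OF fin1(1) pQ s1(1)] d_def by auto
  qed (simp add: d_def)
  have condP: "Re (P s s) > 0 \<or> (\<forall>x\<in>I2. P x s = 0)"
  proof (cases "Re d > 0")
    case False
    then have "d = 0" using dim by (simp add: complex_eq_iff)
    then show ?thesis using psd_zero_col[OF fin1(2) pP s1(2)] dP by auto
  qed (simp add: dP)
  have pQ': "psd_on (I1 - {s}) (schur Q s)"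
    using psd_schur[OF fin1(1) s1(1) hQ _ condQ] pQ dim dQ by simp
  have pP': "psd_on (I2 - {s}) (schur P s)"
    using psd_schur[OF fin1(2) s1(2) hP _ condP] pP dim dP by simp
  have e1: "I1 - {s} = IA \<union> S" using insert by (auto simp: I1_def)
  have e2: "I2 - {s} = S \<union> IB" using insert by (auto simp: I2_def)
  have agr': "\<forall>x\<in>S. \<forall>y\<in>S. schur Q s x y = schur P s x y"
    using agr unfolding schur_def by auto
  obtain W' where W': "psd_on (IA \<union> S \<union> IB) W'"
      "\<forall>x\<in>IA \<union> S. \<forall>y\<in>IA \<union> S. W' x y = schur Q s x y"
      "\<forall>x\<in>S \<union> IB. \<forall>y\<in>S \<union> IB. W' x y = schur P s x y"
    using insert.IH[of "schur Q s" "schur P s"] insert.prems pQ' pP' e1 e2 agr' by auto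
  have hW': "herm (IA \<union> S \<union> IB) W'" using W'(1) psd_on_iff by blast
  define c where "c = (\<lambda>x. if x \<in> I1 then Q x s else P x s)"
  define r where "r = (\<lambda>y. if y \<in> I1 then Q s y else P s y)"
  define W where "W = (\<lambda>x y. if x = s then r y else if y = s then c x else W' x y + c x * r y / d)"
  have Wss: "W s s = d" unfolding W_def r_def using s1 dQ by simp
  have crI: "c x = cnj (r x)" if "x \<in> I" for x
  proof (cases "x \<in> I1")
    case True
    have "Q x s = cnj (Q s x)" using hQ s1 True unfolding herm_def by blast
    then show ?thesis using True unfolding c_def r_def by simp
  next
    case False
    then have "x \<in> I2" using that by (auto simp: I_def I1_def I2_def)
    then have "P x s = cnj (P s x)" using hP s1 unfolding herm_def by blast
    then show ?thesis using False unfolding c_def r_def by simp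
  qed
  have eI: "I - {s} = IA \<union> S \<union> IB" using insert by (auto simp: I_def)
  have hW: "herm I W" unfolding herm_def
  proof (intro ballI)
    fix x y assume xy: "x \<in> I" "y \<in> I"
    show "W y x = cnj (W x y)"
    proof (cases "x = s")
      case True
      then show ?thesis using crI[OF xy(2)] Wss cd unfolding W_def by auto
    next
      case xs: False
      show ?thesis
      proof (cases "y = s")
        case True
        then show ?thesis using crI[OF xy(1)] xs unfolding W_def by auto
      next
        case False
        have "W' y x = cnj (W' x y)" using hW' xy xs False eI unfolding herm_def by blast
        then show ?thesis using xs False crI[OF xy(1)] crI[OF xy(2)] cd unfolding W_def
          by (simp add: mult.commute)
      qed
    qed
  qed
  have condW: "Re (W s s) > 0 \<or> (\<forall>x\<in>I. W x s = 0)"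
  proof (cases "Re d > 0")
    case True then show ?thesis using Wss by simp
  next
    case False
    then have d0: "d = 0" using dim by (simp add: complex_eq_iff)
    have "W x s = 0" if "x \<in> I" for x
    proof (cases "x = s")
      case True then show ?thesis using Wss d0 by simp
    next
      case False
      then have "W x s = c x" unfolding W_def by simp
      also have "c x = 0"
      proof (cases "x \<in> I1")
        case True then show ?thesis using condQ d0 dQ unfolding c_def by auto
      next
        case False
        then have "x \<in> I2" using that by (auto simp: I_def I1_def I2_def)
        then show ?thesis using condP d0 dP False unfolding c_def by auto
      qed
      finally show ?thesis .
    qed
    then show ?thesis by blast
  qed
  have sch: "schur W s x y = W' x y" if "x \<noteq> s" "y \<noteq> s" for x y
    using that Wss unfolding schur_def W_def by simp
  have "psd_on (I - {s}) (schur W s)"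
    using W'(1) unfolding eI by (rule psd_cong) (metis sch eI DiffE singletonI)
  then have pW: "psd_on I W"
    using psd_schur[OF fin1(3) s1(3) hW _ condW] Wss dim by simp
  have a1: "W x y = Q x y" if "x \<in> I1" "y \<in> I1" for x y
  proof -
    consider "x = s" | "x \<noteq> s" "y = s" | "x \<noteq> s" "y \<noteq> s" by blast
    then show ?thesis
    proof cases
      case 1 then show ?thesis using that unfolding W_def r_def by simp
    next
      case 2 then show ?thesis using that unfolding W_def c_def by simp
    next
      case 3
      then have "x \<in> IA \<union> S" "y \<in> IA \<union> S" using that e1 by auto
      then have "W' x y = schur Q s x y" using W'(2) by blast
      then show ?thesis using 3 that dQ unfolding W_def c_def r_def schur_def by simp
    qed
  qed
  have cP: "c x = P x s" if "x \<in> I2" for x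
    using that agr insert.prems(5) unfolding c_def by (auto simp: I1_def I2_def)
  have rP: "r y = P s y" if "y \<in> I2" for y
    using that agr insert.prems(5) unfolding r_def by (auto simp: I1_def I2_def)
  have a2: "W x y = P x y" if "x \<in> I2" "y \<in> I2" for x y
  proof -
    consider "x = s" | "x \<noteq> s" "y = s" | "x \<noteq> s" "y \<noteq> s" by blast
    then show ?thesis
    proof cases
      case 1 then show ?thesis using that rP unfolding W_def by simp
    next
      case 2 then show ?thesis using that cP unfolding W_def by simp
    next
      case 3
      then have "x \<in> S \<union> IB" "y \<in> S \<union> IB" using that e2 by auto
      then have "W' x y = schur P s x y" using W'(3) by blast
      then show ?thesis using 3 that dP cP rP unfolding W_def schur_def by simp
    qed
  qed
  show ?case
    apply (rule exI[of _ W])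
    using pW a1 a2 unfolding I_def I1_def I2_def by blast
qed

lemma two_block:
  assumes "finite IA" "finite IS" "finite IB" "IA \<inter> IS = {}" "IB \<inter> IS = {}" "IA \<inter> IB = {}"
    "psd_on (IA \<union> IS) Q" "psd_on (IS \<union> IB) P" "\<forall>x\<in>IS. \<forall>y\<in>IS. Q x y = P x y"
  shows "\<exists>W. psd_on (IA \<union> IS \<union> IB) W \<and> (\<forall>x\<in>IA \<union> IS. \<forall>y\<in>IA \<union> IS. W x y = Q x y)
        \<and> (\<forall>x\<in>IS \<union> IB. \<forall>y\<in>IS \<union> IB. W x y = P x y)"
  using two_block_aux[OF assms(2)] assms by blast


fun walk :: "(nat \<times> nat) set \<Rightarrow> nat list \<Rightarrow> bool" where
  "walk R [] = True"
| "walk R [x] = True"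
| "walk R (x # y # xs) = (graph_adj R x y \<and> walk R (y # xs))"

lemma walk_nth: "walk R xs \<longleftrightarrow> (\<forall>i. Suc i < length xs \<longrightarrow> graph_adj R (xs ! i) (xs ! Suc i))"
proof (induction R xs rule: walk.induct)
  case (3 R x y xs)
  show ?case
  proof
    assume "walk R (x # y # xs)"
    then show "\<forall>i. Suc i < length (x # y # xs) \<longrightarrow> graph_adj R ((x # y # xs) ! i) ((x # y # xs) ! Suc i)"
      using 3 by (auto simp: nth_Cons split: nat.splits)
  next
    assume h: "\<forall>i. Suc i < length (x # y # xs) \<longrightarrow> graph_adj R ((x # y # xs) ! i) ((x # y # xs) ! Suc i)"
    have "graph_adj R x y" using h[rule_format, of 0] by simp
    moreover have "\<forall>i. Suc i < length (y # xs) \<longrightarrow> graph_adj R ((y # xs) ! i) ((y # xs) ! Suc i)"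
      using h by (metis Suc_less_eq length_Cons nth_Cons_Suc)
    ultimately show "walk R (x # y # xs)" using 3 by simp
  qed
qed auto

lemma walk_Cons: "walk R (x # ys) \<longleftrightarrow> walk R ys \<and> (ys = [] \<or> graph_adj R x (hd ys))"
  by (cases ys) auto

lemma walk_append: "walk R (xs @ ys) \<longleftrightarrow> walk R xs \<and> walk R ys \<and> (xs = [] \<or> ys = [] \<or> graph_adj R (last xs) (hd ys))"
  by (induction xs) (auto simp: walk_Cons)

lemma graph_adj_sym: "sym R \<Longrightarrow> graph_adj R x y \<Longrightarrow> graph_adj R y x"
  unfolding graph_adj_def by (meson symD)

definition reducible :: "(nat \<times> nat) set \<Rightarrow> nat list \<Rightarrow> bool" where
  "reducible R L \<longleftrightarrow> (\<exists>i j. i < j \<and> j < length L \<and> (L ! i = L ! j \<or> (Suc i < j \<and> graph_adj R (L ! i) (L ! j))))"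

lemma walk_take: "walk R L \<Longrightarrow> walk R (take a L)"
  by (metis append_take_drop_id walk_append)

lemma walk_drop: "walk R L \<Longrightarrow> walk R (drop a L)"
  by (metis append_take_drop_id walk_append)

lemma walk_cut:
  assumes "walk R L" "0 < a" "a < b" "b < length L" "graph_adj R (L ! (a - 1)) (L ! b)"
  shows "walk R (take a L @ drop b L)"
proof -
  have "last (take a L) = L ! (a - 1)" using assms by (subst last_conv_nth) (auto simp: min_def)
  moreover have "hd (drop b L) = L ! b" using assms by (simp add: hd_drop_conv_nth)
  ultimately show ?thesis using assms walk_take walk_drop by (simp add: walk_append)
qed

lemma shorten:
  assumes "walk R L" "L \<noteq> []" "hd L = s" "last L = t"
  shows "\<exists>L'. walk R L' \<and> L' \<noteq> [] \<and> hd L' = s \<and> last L' = t \<and> set L' \<subseteq> set L \<and> \<not> reducible R L'"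
  using assms
proof (induction "length L" arbitrary: L rule: less_induct)
  case less
  show ?case
  proof (cases "reducible R L")
    case False
    then show ?thesis using less.prems by blast
  next
    case True
    then obtain i j where ij: "i < j" "j < length L"
      and c: "L ! i = L ! j \<or> (Suc i < j \<and> graph_adj R (L ! i) (L ! j))"
      unfolding reducible_def by blast
    have "\<exists>L'. walk R L' \<and> L' \<noteq> [] \<and> hd L' = s \<and> last L' = t \<and> set L' \<subseteq> set L \<and> length L' < length L"
    proof (cases "L ! i = L ! j")
      case True
      define L' where "L' = take i L @ drop j L"
      have w: "walk R L'"
      proof (cases "i = 0")
        case True then show ?thesis using less.prems walk_drop unfolding L'_def by simp
      next
        case False
        have "graph_adj R (L ! (i - 1)) (L ! i)"
          using less.prems(1) ij False unfolding walk_nth by (metis Suc_pred' bot_nat_0.not_eq_extremum less_trans)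
        then show ?thesis unfolding L'_def using walk_cut[OF less.prems(1), of i j] False ij True by simp
      qed
      have ne: "L' \<noteq> []" using ij unfolding L'_def by simp
      have h: "hd L' = s"
      proof (cases "i = 0")
        case True then show ?thesis using less.prems ij \<open>L ! i = L ! j\<close> unfolding L'_def
          by (simp add: hd_drop_conv_nth hd_conv_nth)
      next
        case False then show ?thesis using less.prems ij unfolding L'_def
          by (simp add: hd_append)
      qed
      have l: "last L' = t" using less.prems ij unfolding L'_def by (simp add: last_append)
      have "set L' \<subseteq> set L" unfolding L'_def using set_take_subset set_drop_subset by fastforce
      moreover have "length L' < length L" unfolding L'_def using ij by simp
      ultimately show ?thesis using w ne h l by blast
    next
      case False
      then have c2: "Suc i < j" "graph_adj R (L ! i) (L ! j)" using c by auto
      define L' where "L' = take (Suc i) L @ drop j L"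
      have w: "walk R L'" unfolding L'_def using walk_cut[OF less.prems(1), of "Suc i" j] c2 ij by simp
      have ne: "L' \<noteq> []" using ij unfolding L'_def by simp
      have h: "hd L' = s" using less.prems ij unfolding L'_def by (simp add: hd_append)
      have l: "last L' = t" using less.prems ij unfolding L'_def by (simp add: last_append)
      have "set L' \<subseteq> set L" unfolding L'_def using set_take_subset set_drop_subset by fastforce
      moreover have "length L' < length L" unfolding L'_def using ij c2 by simp
      ultimately show ?thesis using w ne h l by blast
    qed
    then obtain L' where L': "walk R L'" "L' \<noteq> []" "hd L' = s" "last L' = t" "set L' \<subseteq> set L" "length L' < length L"
      by blast
    from less.hyps[OF L'(6) L'(1-4)] L'(5) show ?thesis by blast
  qed
qed

lemma irred_distinct: "\<not> reducible R L \<Longrightarrow> distinct L"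
  unfolding reducible_def distinct_conv_nth by (metis linorder_neqE_nat)


lemma red_intro: "Suc p < q \<Longrightarrow> q < length L \<Longrightarrow> graph_adj R (L ! p) (L ! q) \<Longrightarrow> reducible R L"
  unfolding reducible_def by (metis Suc_lessD)

lemma no_two_paths:
  assumes tol: "tolerance_relation n R" and ch: "chordal n R"
    and L1: "walk R L1" "L1 \<noteq> []" "hd L1 = s" "last L1 = t" "\<not> reducible R L1" "set L1 \<subseteq> {1..n}"
    and L2: "walk R L2" "L2 \<noteq> []" "hd L2 = s" "last L2 = t" "\<not> reducible R L2" "set L2 \<subseteq> {1..n}"
    and st: "s \<noteq> t" "\<not> graph_adj R s t"
    and XY: "X \<inter> Y = {}" "\<forall>x\<in>X. \<forall>y\<in>Y. \<not> graph_adj R x y"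
    and in1: "set L1 \<subseteq> insert s (insert t X)" and in2: "set L2 \<subseteq> insert s (insert t Y)"
  shows False
proof -
  have symR: "sym R" using tol unfolding tolerance_relation_def by blast
  define l1 where "l1 = length L1"
  define l2 where "l2 = length L2"
  define N where "N = l1 + l2 - 2"
  have d1: "distinct L1" and d2: "distinct L2" using L1(5) L2(5) irred_distinct by blast+
  have w1: "\<And>i. Suc i < l1 \<Longrightarrow> graph_adj R (L1 ! i) (L1 ! Suc i)" using L1(1) unfolding walk_nth l1_def by blast
  have w2: "\<And>i. Suc i < l2 \<Longrightarrow> graph_adj R (L2 ! i) (L2 ! Suc i)" using L2(1) unfolding walk_nth l2_def by blast
  have s1: "L1 ! 0 = s" and t1: "L1 ! (l1 - 1) = t" using L1(2-4) hd_conv_nth last_conv_nth l1_def by metis+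
  have s2: "L2 ! 0 = s" and t2: "L2 ! (l2 - 1) = t" using L2(2-4) hd_conv_nth last_conv_nth l2_def by metis+
  have l1g: "l1 \<ge> 3"
  proof -
    have "l1 \<noteq> 0" using L1(2) l1_def by simp
    moreover have "l1 \<noteq> 1" using s1 t1 st(1) by auto
    moreover have "l1 \<noteq> 2" using w1[of 0] s1 t1 st(2) by auto
    ultimately show ?thesis by linarith
  qed
  have l2g: "l2 \<ge> 3"
  proof -
    have "l2 \<noteq> 0" using L2(2) l2_def by simp
    moreover have "l2 \<noteq> 1" using s2 t2 st(1) by auto
    moreover have "l2 \<noteq> 2" using w2[of 0] s2 t2 st(2) by auto
    ultimately show ?thesis by linarith
  qed
  have int1: "L1 ! k \<in> X \<and> L1 ! k \<noteq> s \<and> L1 ! k \<noteq> t" if "0 < k" "k < l1 - 1" for k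
  proof -
    have ns: "L1 ! k \<noteq> s" using nth_eq_iff_index_eq[OF d1, of k 0] that s1 l1_def L1(2) by auto
    have nt: "L1 ! k \<noteq> t" using nth_eq_iff_index_eq[OF d1, of k "l1 - 1"] that t1 l1_def L1(2) by auto
    have "L1 ! k \<in> set L1" using that l1_def by simp
    then show ?thesis using in1 ns nt by blast
  qed
  have int2: "L2 ! k \<in> Y \<and> L2 ! k \<noteq> s \<and> L2 ! k \<noteq> t" if "0 < k" "k < l2 - 1" for k
  proof -
    have ns: "L2 ! k \<noteq> s" using nth_eq_iff_index_eq[OF d2, of k 0] that s2 l2_def L2(2) by auto
    have nt: "L2 ! k \<noteq> t" using nth_eq_iff_index_eq[OF d2, of k "l2 - 1"] that t2 l2_def L2(2) by auto
    have "L2 ! k \<in> set L2" using that l2_def by simp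
    then show ?thesis using in2 ns nt by blast
  qed
  define f where "f k = (if k < l1 then L1 ! k else L2 ! (N - k))" for k
  define cyc where "cyc = map f [0..<N]"
  have lc: "length cyc = N" unfolding cyc_def by simp
  have cn: "cyc ! k = f k" if "k < N" for k using that unfolding cyc_def by simp
  have fY: "f k \<in> Y \<and> f k \<noteq> s \<and> f k \<noteq> t \<and> f k = L2 ! (N - k) \<and> 0 < N - k \<and> N - k < l2 - 1" if "l1 \<le> k" "k < N" for k
    using that int2[of "N - k"] unfolding f_def N_def by auto
  have fL: "f k = L1 ! k" if "k < l1" for k using that unfolding f_def by simp
  have dc: "distinct cyc"
    unfolding distinct_conv_nth lc
  proof (intro allI impI)
    fix i j assume ij: "i < N" "j < N" "i \<noteq> j"
    show "cyc ! i \<noteq> cyc ! j"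
    proof -
      have "f i \<noteq> f j"
      proof (cases "i < l1")
        case ci: True
        show ?thesis
        proof (cases "j < l1")
          case True then show ?thesis using ci ij fL d1 l1_def by (simp add: nth_eq_iff_index_eq)
        next
          case False
          then have fj: "f j \<in> Y" "f j \<noteq> s" "f j \<noteq> t" using fY[of j] ij False by auto
          have "L1 ! i \<in> insert s (insert t X)" using in1 ci l1_def by (metis nth_mem subsetD)
          then show ?thesis using fj fL ci XY(1) by auto
        qed
      next
        case ci: False
        show ?thesis
        proof (cases "j < l1")
          case cj: True
          then have fj: "f i \<in> Y" "f i \<noteq> s" "f i \<noteq> t" using fY[of i] ij ci by auto
          have "L1 ! j \<in> insert s (insert t X)" using in1 cj l1_def by (metis nth_mem subsetD)
          then show ?thesis using fj fL cj XY(1) by auto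
        next
          case False
          have "N - i \<noteq> N - j" using ij by simp
          moreover have "N - i < l2 - 1" "N - j < l2 - 1" using fY[of i] fY[of j] ci False ij by auto
          then have "N - i < l2" "N - j < l2" by linarith+
          ultimately have "L2 ! (N - i) \<noteq> L2 ! (N - j)" using nth_eq_iff_index_eq[OF d2] l2_def by simp
          then show ?thesis using fY[of i] fY[of j] ci False ij by auto
        qed
      qed
      then show ?thesis using cn ij by simp
    qed
  qed
  have ec: "graph_adj R (cyc ! k) (cyc ! ((k + 1) mod N))" if "k < N" for k
  proof (cases "k + 1 < N")
    case True
    then have m: "(k + 1) mod N = k + 1" by simp
    have "graph_adj R (f k) (f (k + 1))"
    proof (cases "k + 1 < l1")
      case True then show ?thesis using w1 fL by simp
    next
      case False
      show ?thesis
      proof (cases "k + 1 = l1")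
        case True
        have kl: "k = l1 - 1" using True by simp
        have "f k = L2 ! (l2 - 1)" using fL[of k] kl t1 t2 True by simp
        moreover have "f (k + 1) = L2 ! (l2 - 2)" using True unfolding f_def N_def by simp
        moreover have "graph_adj R (L2 ! (l2 - 2)) (L2 ! (l2 - 1))" using w2[of "l2 - 2"] l2g
        proof -
          have "Suc (l2 - 2) = l2 - 1" "Suc (l2 - 2) < l2" using l2g by auto
          then show ?thesis using w2[of "l2 - 2"] by simp
        qed
        ultimately show ?thesis using graph_adj_sym[OF symR] by metis
      next
        case False
        then have kk: "l1 \<le> k" using \<open>\<not> k + 1 < l1\<close> by simp
        have a: "f k = L2 ! (N - k)" using fY kk that by blast
        have b: "f (k + 1) = L2 ! (N - k - 1)" using kk unfolding f_def by simp
        have "graph_adj R (L2 ! (N - k - 1)) (L2 ! Suc (N - k - 1))"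
        proof -
          have "N - k < l2 - 1" using fY[OF kk that] by blast
          then have "Suc (N - k - 1) < l2" using that by arith
          then show ?thesis using w2[of "N - k - 1"] by blast
        qed
        moreover have "Suc (N - k - 1) = N - k" using True by simp
        ultimately show ?thesis using a b graph_adj_sym[OF symR] by metis
      qed
    qed
    then show ?thesis using m cn that True by simp
  next
    case False
    then have k1: "k + 1 = N" using that by simp
    then have kN: "k = N - 1" "(k + 1) mod N = 0" by auto
    have "N - k = 1" "\<not> k < l1" using k1 l2g unfolding N_def by auto
    then have a: "f k = L2 ! 1" unfolding f_def by simp
    have b: "f 0 = L2 ! 0" using fL l1g s1 s2 by simp
    have "graph_adj R (L2 ! 0) (L2 ! 1)" using w2[of 0] l2g by simp
    then show ?thesis using a b kN cn that graph_adj_sym[OF symR] l1g l2g N_def by (metis less_le_trans not_less_eq zero_less_Suc numeral_3_eq_3 gr_zeroI neq0_conv)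
  qed
  have cyc_sub: "set cyc \<subseteq> {1..n}"
  proof
    fix x assume "x \<in> set cyc"
    then obtain k where k: "k < N" "x = f k" unfolding cyc_def by auto
    show "x \<in> {1..n}"
    proof (cases "k < l1")
      case True then show ?thesis using k L1(6) fL l1_def by (metis nth_mem subsetD)
    next
      case False
      then have "x = L2 ! (N - k)" "N - k < l2 - 1" using k fY[of k] by auto
      then have "x \<in> set L2" using l2_def by simp
      then show ?thesis using L2(6) by blast
    qed
  qed
  have iscyc: "is_cycle R cyc" unfolding is_cycle_def using dc ec lc l1g l2g N_def by auto
  have "has_chord R cyc" using ch cyc_sub iscyc lc l1g l2g N_def unfolding chordal_def by auto
  then obtain i j where ij: "i < N" "j < N" "i \<noteq> j" "j \<noteq> (i + 1) mod N" "i \<noteq> (j + 1) mod N"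
      "graph_adj R (f i) (f j)"
    unfolding has_chord_def lc using cn by metis
  have key: False if "i < j" "j < N" "j \<noteq> i + 1" "\<not> (i = 0 \<and> j = N - 1)" "graph_adj R (f i) (f j)" for i j
  proof (cases "j < l1")
    case True
    then have "reducible R L1" unfolding reducible_def using that fL l1_def
      by (metis Suc_eq_plus1 Suc_lessI order.strict_trans)
    then show False using L1(5) by blast
  next
    case jl: False
    then have fj: "f j \<in> Y" "f j = L2 ! (N - j)" "0 < N - j" "N - j < l2 - 1" using fY[of j] that(2) by auto
    consider "l1 \<le> i" | "i = 0" | "i = l1 - 1" | "0 < i" "i < l1 - 1" by linarith
    then show False
    proof cases
      case 1
      then have fi: "f i = L2 ! (N - i)" "N - i < l2 - 1" using fY[of i] that by auto
      have "Suc (N - j) < N - i" using that by auto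
      moreover have "graph_adj R (L2 ! (N - j)) (L2 ! (N - i))" using that fi fj graph_adj_sym[OF symR] by metis
      moreover have "N - i < length L2" using fi l2_def by linarith
      ultimately have "reducible R L2" by (meson red_intro)
      then show False using L2(5) by blast
    next
      case 2
      then have "f i = L2 ! 0" using fL s1 s2 l1g by simp
      moreover have "Suc 0 < N - j" using that 2 by auto
      moreover have "N - j < length L2" using fj l2_def by linarith
      ultimately have "reducible R L2" using red_intro[of 0 "N - j" L2 R] that fj by simp
      then show False using L2(5) by blast
    next
      case 3
      then have fi: "f i = L2 ! (l2 - 1)" using fL t1 t2 l1g by simp
      have "Suc (N - j) < l2 - 1" using that 3 jl unfolding N_def by auto
      moreover have "graph_adj R (L2 ! (N - j)) (L2 ! (l2 - 1))" using that fi fj graph_adj_sym[OF symR] by metis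
      moreover have "l2 - 1 < length L2" using l2g l2_def by simp
      ultimately have "reducible R L2" by (meson red_intro)
      then show False using L2(5) by blast
    next
      case 4
      then have "f i \<in> X" using int1 fL by simp
      then show False using fj XY(2) that by blast
    qed
  qed
  show False
  proof (cases "i < j")
    case True
    have "(i + 1) mod N = i + 1" using True ij by simp
    moreover have "\<not> (i = 0 \<and> j = N - 1)" using ij(5) ij(2) by auto
    ultimately show False using key[OF True ij(2)] ij by auto
  next
    case False
    then have ji: "j < i" using ij by simp
    have "(j + 1) mod N = j + 1" using ji ij by simp
    moreover have "\<not> (j = 0 \<and> i = N - 1)" using ij(4) ij(1) by auto
    moreover have "graph_adj R (f j) (f i)" using ij(6) graph_adj_sym[OF symR] by blast
    ultimately show False using key[OF ji ij(1)] ij by auto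
  qed
qed


definition Ed :: "(nat \<times> nat) set \<Rightarrow> nat set \<Rightarrow> (nat \<times> nat) set" where
  "Ed R W = {(x, y). x \<in> W \<and> y \<in> W \<and> graph_adj R x y}"

definition compo :: "(nat \<times> nat) set \<Rightarrow> nat set \<Rightarrow> nat \<Rightarrow> nat set" where
  "compo R W a = {y. (a, y) \<in> (Ed R W)\<^sup>*}"

lemma rt_sym:
  assumes "sym R" "(x, y) \<in> (Ed R W)\<^sup>*"
  shows "(y, x) \<in> (Ed R W)\<^sup>*"
proof -
  have "sym (Ed R W)" unfolding Ed_def sym_def using graph_adj_sym[OF assms(1)] by blast
  then have "sym ((Ed R W)\<^sup>*)" by (rule sym_rtrancl)
  then show ?thesis using assms(2) by (meson symD)
qed

lemma comp_sub: "a \<in> W \<Longrightarrow> compo R W a \<subseteq> W"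
proof
  fix y assume "a \<in> W" "y \<in> compo R W a"
  then have "(a, y) \<in> (Ed R W)\<^sup>*" unfolding compo_def by simp
  then show "y \<in> W" using \<open>a \<in> W\<close> by (induction rule: rtrancl_induct) (auto simp: Ed_def)
qed

lemma comp_closed: "y \<in> compo R W a \<Longrightarrow> y \<in> W \<Longrightarrow> z \<in> W \<Longrightarrow> graph_adj R y z \<Longrightarrow> z \<in> compo R W a"
  unfolding compo_def Ed_def by (auto intro: rtrancl_into_rtrancl)

lemma rt_walk:
  assumes "(u, w) \<in> (Ed R W)\<^sup>*"
  shows "\<exists>xs. xs \<noteq> [] \<and> hd xs = u \<and> last xs = w \<and> walk R xs \<and> set xs \<subseteq> {y. (u, y) \<in> (Ed R W)\<^sup>*}"
  using assms
proof (induction rule: rtrancl_induct)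
  case base
  then show ?case by (intro exI[of _ "[u]"]) auto
next
  case (step y z)
  then obtain xs where xs: "xs \<noteq> []" "hd xs = u" "last xs = y" "walk R xs" "set xs \<subseteq> {y. (u, y) \<in> (Ed R W)\<^sup>*}"
    by blast
  have "graph_adj R y z" using step(2) unfolding Ed_def by simp
  then have "walk R (xs @ [z])" using xs by (simp add: walk_append)
  moreover have "set (xs @ [z]) \<subseteq> {y. (u, y) \<in> (Ed R W)\<^sup>*}" using xs(5) step by auto
  ultimately show ?case using xs by (intro exI[of _ "xs @ [z]"]) auto
qed

lemma nbr:
  assumes "a \<in> W" "(a, b) \<in> (Ed R (insert s W))\<^sup>*" "b \<notin> compo R W a"
  shows "\<exists>u\<in>compo R W a. graph_adj R u s"
proof -
  have "y \<in> compo R W a \<or> (\<exists>u\<in>compo R W a. graph_adj R u s)" if "(a, y) \<in> (Ed R (insert s W))\<^sup>*" for y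
    using that
  proof (induction rule: rtrancl_induct)
    case base
    then show ?case unfolding compo_def by simp
  next
    case (step y z)
    then have yz: "y \<in> insert s W" "z \<in> insert s W" "graph_adj R y z" unfolding Ed_def by auto
    show ?case
    proof (cases "y \<in> compo R W a")
      case True
      then have yW: "y \<in> W" using comp_sub[OF assms(1)] by blast
      show ?thesis
      proof (cases "z = s")
        case True then show ?thesis using \<open>y \<in> compo R W a\<close> yz by blast
      next
        case False
        then have "z \<in> W" using yz by simp
        then show ?thesis using comp_closed[OF \<open>y \<in> compo R W a\<close> yW _ yz(3)] by blast
      qed
    next
      case False then show ?thesis using step.IH by blast
    qed
  qed
  then show ?thesis using assms(2,3) by blast
qed

lemma path_through:
  assumes "sym R" "us \<in> compo R W a" "ut \<in> compo R W a" "graph_adj R s us" "graph_adj R ut t"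
  shows "\<exists>L. walk R L \<and> L \<noteq> [] \<and> hd L = s \<and> last L = t \<and> set L \<subseteq> insert s (insert t (compo R W a))
           \<and> \<not> reducible R L"
proof -
  have au: "(a, us) \<in> (Ed R W)\<^sup>*" "(a, ut) \<in> (Ed R W)\<^sup>*" using assms(2,3) unfolding compo_def by auto
  have "(us, ut) \<in> (Ed R W)\<^sup>*" using rt_sym[OF assms(1) au(1)] au(2) by (meson rtrancl_trans)
  then obtain xs where xs: "xs \<noteq> []" "hd xs = us" "last xs = ut" "walk R xs" "set xs \<subseteq> {y. (us, y) \<in> (Ed R W)\<^sup>*}"
    using rt_walk by blast
  have sx: "set xs \<subseteq> compo R W a" using xs(5) au(1) unfolding compo_def by (auto intro: rtrancl_trans)
  define L where "L = [s] @ xs @ [t]"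
  have w: "walk R L" unfolding L_def using xs assms(4,5) by (simp add: walk_append walk_Cons hd_append)
  have "set L \<subseteq> insert s (insert t (compo R W a))" using sx unfolding L_def by auto
  moreover have "L \<noteq> []" "hd L = s" "last L = t" unfolding L_def by auto
  ultimately show ?thesis using shorten[OF w] by (meson order_trans)
qed

lemma separator:
  assumes tol: "tolerance_relation n R" and ch: "chordal n R"
    and V: "V \<subseteq> {1..n}" "a \<in> V" "b \<in> V" "a \<noteq> b" "\<not> graph_adj R a b"
  shows "\<exists>A S B. V = A \<union> S \<union> B \<and> A \<inter> S = {} \<and> B \<inter> S = {} \<and> A \<inter> B = {} \<and> a \<in> A \<and> b \<in> B
     \<and> is_clique R S \<and> (\<forall>i\<in>A. \<forall>j\<in>B. (i, j) \<notin> R)"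
proof -
  have symR: "sym R" using tol unfolding tolerance_relation_def by blast
  have finV: "finite V" using V(1) finite_subset by blast
  define Psep where "Psep S \<longleftrightarrow> S \<subseteq> V - {a, b} \<and> b \<notin> compo R (V - S) a" for S
  have "Psep (V - {a, b})"
  proof -
    have e: "V - (V - {a, b}) = {a, b}" using V by auto
    have "y = a" if "(a, y) \<in> (Ed R {a, b})\<^sup>*" for y
      using that by (induction rule: rtrancl_induct) (use V(5) in \<open>auto simp: Ed_def graph_adj_def\<close>)
    then have "b \<notin> compo R {a, b} a" using V(4) unfolding compo_def by auto
    then show ?thesis unfolding Psep_def e by simp
  qed
  then obtain S where S: "Psep S" and Smin: "\<And>S'. Psep S' \<Longrightarrow> card S \<le> card S'"
    using ex_has_least_nat[of Psep "V - {a, b}" card] by blast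
  have SV: "S \<subseteq> V - {a, b}" and bS: "b \<notin> compo R (V - S) a" using S unfolding Psep_def by auto
  have finS: "finite S" using SV finV finite_subset by blast
  define W where "W = V - S"
  have aW: "a \<in> W" and bW: "b \<in> W" using SV V unfolding W_def by auto
  define A where "A = compo R W a"
  define Bc where "Bc = compo R W b"
  have AW: "A \<subseteq> W" unfolding A_def using comp_sub[OF aW] .
  have BcW: "Bc \<subseteq> W" unfolding Bc_def using comp_sub[OF bW] .
  have aA: "a \<in> A" unfolding A_def compo_def by simp
  have bA: "b \<notin> A" using bS unfolding A_def W_def by simp
  have disj: "A \<inter> Bc = {}"
  proof (rule ccontr)
    assume "A \<inter> Bc \<noteq> {}"
    then obtain x where "(a, x) \<in> (Ed R W)\<^sup>*" "(b, x) \<in> (Ed R W)\<^sup>*" unfolding A_def Bc_def compo_def by auto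
    then have "(a, b) \<in> (Ed R W)\<^sup>*" using rt_sym[OF symR] by (meson rtrancl_trans)
    then show False using bA unfolding A_def compo_def by simp
  qed
  have noedge: "\<not> graph_adj R x y" if "x \<in> A" "y \<in> Bc" for x y
  proof
    assume "graph_adj R x y"
    then have "y \<in> A" using comp_closed[of x R W a y] that AW BcW unfolding A_def by blast
    then show False using disj that by blast
  qed
  have nb: "(\<exists>u\<in>A. graph_adj R u x) \<and> (\<exists>u\<in>Bc. graph_adj R u x)" if xS: "x \<in> S" for x
  proof -
    have "card (S - {x}) < card S" using finS xS by (meson card_Diff1_less)
    then have "\<not> Psep (S - {x})" using Smin by (meson not_le)
    moreover have "S - {x} \<subseteq> V - {a, b}" using SV by auto
    ultimately have "b \<in> compo R (V - (S - {x})) a" unfolding Psep_def by blast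
    moreover have "V - (S - {x}) = insert x W" using xS SV unfolding W_def by auto
    ultimately have ab: "(a, b) \<in> (Ed R (insert x W))\<^sup>*" unfolding compo_def by simp
    have "\<exists>u\<in>compo R W a. graph_adj R u x" using nbr[OF aW ab] bA unfolding A_def by blast
    moreover have "\<exists>u\<in>compo R W b. graph_adj R u x"
    proof (rule nbr[OF bW rt_sym[OF symR ab]])
      show "a \<notin> compo R W b"
      proof
        assume "a \<in> compo R W b"
        then have "(a, b) \<in> (Ed R W)\<^sup>*" using rt_sym[OF symR] unfolding compo_def by blast
        then show False using bA unfolding A_def compo_def by simp
      qed
    qed
    ultimately show ?thesis unfolding A_def Bc_def by blast
  qed
  have clique: "is_clique R S"
    unfolding is_clique_def
  proof (intro ballI impI)
    fix s t assume st: "s \<in> S" "t \<in> S" "s \<noteq> t"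
    show "graph_adj R s t"
    proof (rule ccontr)
      assume nst: "\<not> graph_adj R s t"
      obtain us ut where u1: "us \<in> A" "graph_adj R us s" "ut \<in> A" "graph_adj R ut t"
        using nb st by blast
      obtain vs vt where u2: "vs \<in> Bc" "graph_adj R vs s" "vt \<in> Bc" "graph_adj R vt t"
        using nb st by blast
      obtain L1 where L1: "walk R L1" "L1 \<noteq> []" "hd L1 = s" "last L1 = t"
          "set L1 \<subseteq> insert s (insert t A)" "\<not> reducible R L1"
        using path_through[OF symR, of us W a ut s t] u1 graph_adj_sym[OF symR] unfolding A_def by blast
      obtain L2 where L2: "walk R L2" "L2 \<noteq> []" "hd L2 = s" "last L2 = t"
          "set L2 \<subseteq> insert s (insert t Bc)" "\<not> reducible R L2"
        using path_through[OF symR, of vs W b vt s t] u2 graph_adj_sym[OF symR] unfolding Bc_def by blast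
      have sub: "insert s (insert t A) \<subseteq> {1..n}" "insert s (insert t Bc) \<subseteq> {1..n}"
        using st SV AW BcW V(1) unfolding W_def by auto
      have s1: "set L1 \<subseteq> {1..n}" using sub(1) L1(5) by (rule order_trans[rotated])
      have s2: "set L2 \<subseteq> {1..n}" using sub(2) L2(5) by (rule order_trans[rotated])
      have ne: "\<forall>x\<in>A. \<forall>y\<in>Bc. \<not> graph_adj R x y" using noedge by blast
      show False
        by (rule no_two_paths[OF tol ch L1(1-4,6) s1 L2(1-4,6) s2 st(3) nst disj ne L1(5) L2(5)])
    qed
  qed
  define B where "B = W - A"
  have "V = A \<union> S \<union> B" using AW SV unfolding B_def W_def by auto
  moreover have "A \<inter> S = {}" "B \<inter> S = {}" "A \<inter> B = {}" using AW unfolding B_def W_def by auto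
  moreover have "b \<in> B" using bW bA unfolding B_def by simp
  moreover have "\<forall>i\<in>A. \<forall>j\<in>B. (i, j) \<notin> R"
  proof (intro ballI)
    fix i j assume ij: "i \<in> A" "j \<in> B"
    show "(i, j) \<notin> R"
    proof
      assume "(i, j) \<in> R"
      moreover have "i \<noteq> j" using ij unfolding B_def by auto
      ultimately have "graph_adj R i j" unfolding graph_adj_def by simp
      then have "j \<in> A" using comp_closed[of i R W a j] ij AW unfolding A_def B_def by blast
      then show False using ij unfolding B_def by simp
    qed
  qed
  ultimately show ?thesis using aA clique by blast
qed


lemma completion:
  fixes m :: nat
  assumes tol: "tolerance_relation n R" and ch: "chordal n R"
  shows "finite V \<Longrightarrow> V \<subseteq> {1..n} \<Longrightarrow> (\<forall>C. C \<subseteq> V \<longrightarrow> is_clique R C \<longrightarrow> psd_on ({..<m} \<times> C) Mf) \<Longrightarrow>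
    \<exists>Z. psd_on ({..<m} \<times> V) Z \<and> (\<forall>k<m. \<forall>l<m. \<forall>i\<in>V. \<forall>j\<in>V. (i, j) \<in> R \<longrightarrow> Z (k, i) (l, j) = Mf (k, i) (l, j))"
proof (induction V rule: finite_psubset_induct)
  case (psubset V)
  have symR: "sym R" and reflR: "refl_on {1..n} R" using tol unfolding tolerance_relation_def by blast+
  show ?case
  proof (cases "is_clique R V")
    case True
    then show ?thesis using psubset.prems by blast
  next
    case False
    then obtain a b where ab: "a \<in> V" "b \<in> V" "a \<noteq> b" "\<not> graph_adj R a b"
      unfolding is_clique_def by blast
    obtain A S B where sep: "V = A \<union> S \<union> B" "A \<inter> S = {}" "B \<inter> S = {}" "A \<inter> B = {}" "a \<in> A" "b \<in> B"
      "is_clique R S" "\<forall>i\<in>A. \<forall>j\<in>B. (i, j) \<notin> R"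
      using separator[OF tol ch psubset.prems(1) ab] by blast
    have ps1: "A \<union> S \<subset> V" using sep by blast
    have ps2: "S \<union> B \<subset> V" using sep by blast
    have h1a: "A \<union> S \<subseteq> {1..n}" using ps1 psubset.prems(1) by blast
    have h1b: "\<forall>C. C \<subseteq> A \<union> S \<longrightarrow> is_clique R C \<longrightarrow> psd_on ({..<m} \<times> C) Mf"
      using psubset.prems(2) ps1 by blast
    obtain Z1 where Z1: "psd_on ({..<m} \<times> (A \<union> S)) Z1"
      "\<forall>k<m. \<forall>l<m. \<forall>i\<in>A \<union> S. \<forall>j\<in>A \<union> S. (i, j) \<in> R \<longrightarrow> Z1 (k, i) (l, j) = Mf (k, i) (l, j)"
      using psubset.IH[OF ps1 h1a h1b] by blast
    have h2a: "S \<union> B \<subseteq> {1..n}" using ps2 psubset.prems(1) by blast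
    have h2b: "\<forall>C. C \<subseteq> S \<union> B \<longrightarrow> is_clique R C \<longrightarrow> psd_on ({..<m} \<times> C) Mf"
      using psubset.prems(2) ps2 by blast
    obtain Z2 where Z2: "psd_on ({..<m} \<times> (S \<union> B)) Z2"
      "\<forall>k<m. \<forall>l<m. \<forall>i\<in>S \<union> B. \<forall>j\<in>S \<union> B. (i, j) \<in> R \<longrightarrow> Z2 (k, i) (l, j) = Mf (k, i) (l, j)"
      using psubset.IH[OF ps2 h2a h2b] by blast
    have finV: "finite V" by fact
    have fin: "finite ({..<m} \<times> A)" "finite ({..<m} \<times> S)" "finite ({..<m} \<times> B)"
      using finV sep(1) by (auto intro!: finite_cartesian_product)
    have dj: "({..<m} \<times> A) \<inter> ({..<m} \<times> S) = {}" "({..<m} \<times> B) \<inter> ({..<m} \<times> S) = {}"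
      "({..<m} \<times> A) \<inter> ({..<m} \<times> B) = {}" using sep by auto
    have u1: "{..<m} \<times> (A \<union> S) = {..<m} \<times> A \<union> {..<m} \<times> S" by auto
    have u2: "{..<m} \<times> (S \<union> B) = {..<m} \<times> S \<union> {..<m} \<times> B" by auto
    have SR: "(i, j) \<in> R" if "i \<in> S" "j \<in> S" for i j
    proof (cases "i = j")
      case True
      have "i \<in> {1..n}" using that psubset.prems(1) sep(1) by auto
      then show ?thesis using reflR True unfolding refl_on_def by blast
    next
      case False then show ?thesis using sep(7) that unfolding is_clique_def graph_adj_def by blast
    qed
    have agr: "\<forall>x\<in>{..<m} \<times> S. \<forall>y\<in>{..<m} \<times> S. Z1 x y = Z2 x y"
      using Z1(2) Z2(2) SR by fastforce
    obtain W where W: "psd_on ({..<m} \<times> A \<union> {..<m} \<times> S \<union> {..<m} \<times> B) W"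
      "\<forall>x\<in>{..<m} \<times> A \<union> {..<m} \<times> S. \<forall>y\<in>{..<m} \<times> A \<union> {..<m} \<times> S. W x y = Z1 x y"
      "\<forall>x\<in>{..<m} \<times> S \<union> {..<m} \<times> B. \<forall>y\<in>{..<m} \<times> S \<union> {..<m} \<times> B. W x y = Z2 x y"
      using two_block[OF fin(1,2,3) dj Z1(1)[unfolded u1] Z2(1)[unfolded u2] agr] by blast
    have uV: "{..<m} \<times> A \<union> {..<m} \<times> S \<union> {..<m} \<times> B = {..<m} \<times> V" using sep(1) by auto
    have "W (k, i) (l, j) = Mf (k, i) (l, j)" if "k < m" "l < m" "i \<in> V" "j \<in> V" "(i, j) \<in> R" for k l i j
    proof -
      have "(i \<in> A \<union> S \<and> j \<in> A \<union> S) \<or> (i \<in> S \<union> B \<and> j \<in> S \<union> B)"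
      proof -
        have "\<not> (i \<in> A \<and> j \<in> B)" using sep(8) that by blast
        moreover have "\<not> (i \<in> B \<and> j \<in> A)" using sep(8) that symR by (meson symD)
        ultimately show ?thesis using that sep(1) by blast
      qed
      then show ?thesis using W(2,3) Z1(2) Z2(2) that by auto
    qed
    then show ?thesis using W(1) uV by auto
  qed
qed

lemma max_clique_exists:
  assumes "C \<subseteq> {1..n}" "is_clique R C"
  shows "\<exists>C0\<in>maximal_cliques n R. C \<subseteq> C0"
proof -
  define F where "F = {D. C \<subseteq> D \<and> D \<subseteq> {1..n} \<and> is_clique R D}"
  have "finite F" unfolding F_def by (rule finite_subset[of _ "Pow {1..n}"]) auto
  moreover have "F \<noteq> {}" using assms unfolding F_def by blast
  ultimately obtain M where M: "M \<in> F" "\<forall>b\<in>F. M \<subseteq> b \<longrightarrow> M = b"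
    using finite_has_maximal by blast
  have "M \<in> maximal_cliques n R"
    unfolding maximal_cliques_def using M unfolding F_def by auto
  then show ?thesis using M unfolding F_def by blast
qed

lemma pair_clique:
  assumes "sym R" "(i, j) \<in> R"
  shows "is_clique R {i, j}"
  unfolding is_clique_def graph_adj_def using assms by (auto dest: symD)

lemma psd_blocks:
  assumes fin: "finite D"
    and z: "\<And>x y. x \<in> D \<Longrightarrow> y \<in> D \<Longrightarrow> \<kappa> x \<noteq> \<kappa> y \<Longrightarrow> A x y = 0"
    and p: "\<And>c. c \<in> \<kappa> ` D \<Longrightarrow> psd_on {x \<in> D. \<kappa> x = c} A"
  shows "psd_on D A"
proof -
  have "herm D A" unfolding herm_def
  proof (intro ballI)
    fix x y assume xy: "x \<in> D" "y \<in> D"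
    show "A y x = cnj (A x y)"
    proof (cases "\<kappa> x = \<kappa> y")
      case True
      have "herm {z \<in> D. \<kappa> z = \<kappa> x} A" using p[of "\<kappa> x"] xy psd_on_iff by blast
      moreover have "x \<in> {z \<in> D. \<kappa> z = \<kappa> x}" "y \<in> {z \<in> D. \<kappa> z = \<kappa> x}" using xy True by auto
      ultimately show ?thesis unfolding herm_def by blast
    next
      case False
      then show ?thesis using z xy by (metis complex_cnj_zero)
    qed
  qed
  moreover have "Im (qf D A v) = 0 \<and> 0 \<le> Re (qf D A v)" for v
  proof -
    define F where "F x y = cnj (v x) * A x y * v y" for x y
    have "qf D A v = (\<Sum>x\<in>D. \<Sum>y\<in>{y \<in> D. \<kappa> y = \<kappa> x}. F x y)"
      unfolding qf_def F_def
    proof (rule sum.cong[OF refl])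
      fix x assume x: "x \<in> D"
      show "(\<Sum>y\<in>D. cnj (v x) * A x y * v y) = (\<Sum>y\<in>{y \<in> D. \<kappa> y = \<kappa> x}. cnj (v x) * A x y * v y)"
      proof -
        have "\<forall>i\<in>D - {y \<in> D. \<kappa> y = \<kappa> x}. cnj (v x) * A x i * v i = 0"
          using z x by (metis (mono_tags, lifting) DiffE mem_Collect_eq mult_eq_0_iff)
        then show ?thesis by (intro sum.mono_neutral_right fin) auto
      qed
    qed
    also have "\<dots> = (\<Sum>c\<in>\<kappa> ` D. \<Sum>x\<in>{x \<in> D. \<kappa> x = c}. \<Sum>y\<in>{y \<in> D. \<kappa> y = \<kappa> x}. F x y)"
      by (rule sum.group[where g=\<kappa>, OF fin finite_imageI[OF fin] subset_refl, symmetric])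
    also have "\<dots> = (\<Sum>c\<in>\<kappa> ` D. qf {x \<in> D. \<kappa> x = c} A v)"
      unfolding qf_def F_def by (intro sum.cong refl) auto
    finally have e: "qf D A v = (\<Sum>c\<in>\<kappa> ` D. qf {x \<in> D. \<kappa> x = c} A v)" .
    have "\<forall>c\<in>\<kappa> ` D. Im (qf {x \<in> D. \<kappa> x = c} A v) = 0 \<and> 0 \<le> Re (qf {x \<in> D. \<kappa> x = c} A v)"
      using p psd_on_iff by blast
    then have h: "\<And>c. c \<in> \<kappa> ` D \<Longrightarrow> Im (qf {x \<in> D. \<kappa> x = c} A v) = 0"
      "\<And>c. c \<in> \<kappa> ` D \<Longrightarrow> 0 \<le> Re (qf {x \<in> D. \<kappa> x = c} A v)" by blast+
    have "Im (qf D A v) = 0" unfolding e Im_sum using h(1) by (simp del: image_iff)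
    moreover have "0 \<le> Re (qf D A v)" unfolding e Re_sum using h(2) by (intro sum_nonneg) blast
    ultimately show ?thesis by blast
  qed
  ultimately show ?thesis unfolding psd_on_iff by blast
qed


lemma clique_in_R:
  assumes "tolerance_relation n R" "C \<subseteq> {1..n}" "is_clique R C" "i \<in> C" "j \<in> C"
  shows "(i, j) \<in> R"
proof (cases "i = j")
  case True
  then show ?thesis using assms unfolding tolerance_relation_def refl_on_def by blast
next
  case False
  then show ?thesis using assms unfolding is_clique_def graph_adj_def by blast
qed

lemma finite_MC: "finite (maximal_cliques n R)"
  by (rule finite_subset[of _ "Pow {1..n}"]) (auto simp: maximal_cliques_def)

lemma MC_sub: "C \<in> maximal_cliques n R \<Longrightarrow> C \<subseteq> {1..n} \<and> is_clique R C"
  unfolding maximal_cliques_def by blast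

lemma inj_part:
  assumes tol: "tolerance_relation n R"
  shows "inj_on (Phi_m n R m) (Mm_E n R m)"
proof
  fix M M' assume M: "M \<in> Mm_E n R m" and M': "M' \<in> Mm_E n R m" and eq: "Phi_m n R m M = Phi_m n R m M'"
  have symR: "sym R" using tol unfolding tolerance_relation_def by blast
  have "M k l i j = M' k l i j" for k l i j
  proof (cases "k < m \<and> l < m \<and> i \<in> {1..n} \<and> j \<in> {1..n} \<and> (i, j) \<in> R")
    case True
    have "is_clique R {i, j}" using pair_clique[OF symR] True by blast
    moreover have "{i, j} \<subseteq> {1..n}" using True by auto
    ultimately obtain C0 where C0: "C0 \<in> maximal_cliques n R" "{i, j} \<subseteq> C0" using max_clique_exists by blast
    have "Phi_m n R m M k l C0 i j = M k l i j" using True C0 unfolding Phi_m_def Phi_def by auto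
    moreover have "Phi_m n R m M' k l C0 i j = M' k l i j" using True C0 unfolding Phi_m_def Phi_def by auto
    ultimately show ?thesis using eq by metis
  next
    case False
    then have "M k l i j = 0" "M' k l i j = 0" using M M' unfolding Mm_E_def by blast+
    then show ?thesis by simp
  qed
  then show "M = M'" by (intro ext)
qed

lemma dsum_iff:
  fixes M :: "nat \<Rightarrow> nat \<Rightarrow> nat \<Rightarrow> nat \<Rightarrow> complex"
  shows "dsum_pos n R m (Phi_m n R m M) \<longleftrightarrow>
     (\<forall>C\<in>maximal_cliques n R. psd_on ({..<m} \<times> C) (\<lambda>(k, i) (l, j). M k l i j))"
proof -
  define MC where "MC = maximal_cliques n R"
  define D where "D = {(k, C, i). k < m \<and> C \<in> MC \<and> i \<in> C}"
  define Bk where "Bk = (\<lambda>(k, C, i) (l, D, j). if C = D then Phi_m n R m M k l C i j else 0)"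
  define Mf where "Mf = (\<lambda>(k::nat, i::nat) (l::nat, j::nat). M k l i j)"
  have ds: "dsum_pos n R m (Phi_m n R m M) \<longleftrightarrow> psd_on D Bk"
    unfolding dsum_pos_def D_def Bk_def MC_def by simp
  have finD: "finite D"
  proof (rule finite_subset)
    show "D \<subseteq> {..<m} \<times> MC \<times> {1..n}" unfolding D_def MC_def using MC_sub by auto
    show "finite ({..<m} \<times> MC \<times> {1..n})" using finite_MC unfolding MC_def by auto
  qed
  define f where "f C0 = (\<lambda>(k::nat, i::nat). (k, C0, i))" for C0 :: "nat set"
  have injf: "inj_on (f C0) X" for C0 X unfolding f_def inj_on_def by auto
  have img: "f C0 ` ({..<m} \<times> C0) = {x \<in> D. fst (snd x) = C0}" if "C0 \<in> MC" for C0
    using that unfolding f_def D_def by force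
  have cong: "Bk (f C0 x) (f C0 y) = Mf x y" if "C0 \<in> MC" "x \<in> {..<m} \<times> C0" "y \<in> {..<m} \<times> C0" for C0 x y
    using that unfolding Bk_def f_def Mf_def Phi_m_def Phi_def MC_def by auto
  have blk: "psd_on {x \<in> D. fst (snd x) = C0} Bk \<longleftrightarrow> psd_on ({..<m} \<times> C0) Mf" if "C0 \<in> MC" for C0
  proof -
    have "psd_on {x \<in> D. fst (snd x) = C0} Bk \<longleftrightarrow> psd_on ({..<m} \<times> C0) (\<lambda>x y. Bk (f C0 x) (f C0 y))"
      using psd_reindex[OF injf, of C0 "{..<m} \<times> C0" Bk] img[OF that] by simp
    also have "\<dots> \<longleftrightarrow> psd_on ({..<m} \<times> C0) Mf"
      using cong[OF that] psd_cong by (metis (no_types, lifting))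
    finally show ?thesis .
  qed
  have "psd_on D Bk \<longleftrightarrow> (\<forall>C\<in>MC. psd_on ({..<m} \<times> C) Mf)"
  proof
    assume p: "psd_on D Bk"
    show "\<forall>C\<in>MC. psd_on ({..<m} \<times> C) Mf"
    proof
      fix C assume C: "C \<in> MC"
      have "psd_on {x \<in> D. fst (snd x) = C} Bk" by (rule psd_restrict[OF finD _ p]) auto
      then show "psd_on ({..<m} \<times> C) Mf" using blk[OF C] by simp
    qed
  next
    assume p: "\<forall>C\<in>MC. psd_on ({..<m} \<times> C) Mf"
    show "psd_on D Bk"
    proof (rule psd_blocks[OF finD, of "\<lambda>x. fst (snd x)"])
      show "Bk x y = 0" if "x \<in> D" "y \<in> D" "fst (snd x) \<noteq> fst (snd y)" for x y
        using that unfolding Bk_def by (auto split: prod.splits)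
      show "psd_on {x \<in> D. fst (snd x) = c} Bk" if "c \<in> (\<lambda>x. fst (snd x)) ` D" for c
      proof -
        have "c \<in> MC" using that unfolding D_def by auto
        then show ?thesis using blk p by blast
      qed
    qed
  qed
  then show ?thesis using ds unfolding MC_def Mf_def by simp
qed

lemma dual_iff:
  assumes tol: "tolerance_relation n R" and ch: "chordal n R" and M: "M \<in> Mm_E n R m"
  shows "dual_pos n R m M \<longleftrightarrow>
     (\<forall>C\<in>maximal_cliques n R. psd_on ({..<m} \<times> C) (\<lambda>(k, i) (l, j). M k l i j))"
proof
  assume "dual_pos n R m M"
  then obtain N where N: "N \<in> Mm_Eperp n R m"
    "psd_on ({..<m} \<times> {1..n}) (\<lambda>(k, i) (l, j). M k l i j + N k l i j)"
    unfolding dual_pos_def by blast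
  show "\<forall>C\<in>maximal_cliques n R. psd_on ({..<m} \<times> C) (\<lambda>(k, i) (l, j). M k l i j)"
  proof
    fix C assume C: "C \<in> maximal_cliques n R"
    have Cs: "C \<subseteq> {1..n}" "is_clique R C" using MC_sub[OF C] by auto
    have "psd_on ({..<m} \<times> C) (\<lambda>(k, i) (l, j). M k l i j + N k l i j)"
      by (rule psd_restrict[OF _ _ N(2)]) (use Cs in auto)
    then show "psd_on ({..<m} \<times> C) (\<lambda>(k, i) (l, j). M k l i j)"
    proof (rule psd_cong)
      fix x y assume xy: "x \<in> {..<m} \<times> C" "y \<in> {..<m} \<times> C"
      then obtain k i l j where kl: "x = (k, i)" "y = (l, j)" "i \<in> C" "j \<in> C" by auto
      have "(i, j) \<in> R" using clique_in_R[OF tol Cs kl(3,4)] .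
      then have "N k l i j = 0" using N(1) unfolding Mm_Eperp_def by blast
      then show "(\<lambda>(k, i) (l, j). M k l i j + N k l i j) x y = (\<lambda>(k, i) (l, j). M k l i j) x y"
        using kl by simp
    qed
  qed
next
  assume p: "\<forall>C\<in>maximal_cliques n R. psd_on ({..<m} \<times> C) (\<lambda>(k, i) (l, j). M k l i j)"
  define Mf where "Mf = (\<lambda>(k::nat, i::nat) (l::nat, j::nat). M k l i j)"
  have pc: "\<forall>C. C \<subseteq> {1..n} \<longrightarrow> is_clique R C \<longrightarrow> psd_on ({..<m} \<times> C) Mf"
  proof (intro allI impI)
    fix C assume C: "C \<subseteq> {1..n}" "is_clique R C"
    obtain C0 where C0: "C0 \<in> maximal_cliques n R" "C \<subseteq> C0" using max_clique_exists[OF C] by blast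
    have "finite C0" using MC_sub[OF C0(1)] finite_subset by blast
    then show "psd_on ({..<m} \<times> C) Mf"
      using psd_restrict[of "{..<m} \<times> C0" "{..<m} \<times> C" Mf] p C0 unfolding Mf_def by auto
  qed
  obtain Z where Z: "psd_on ({..<m} \<times> {1..n}) Z"
    "\<forall>k<m. \<forall>l<m. \<forall>i\<in>{1..n}. \<forall>j\<in>{1..n}. (i, j) \<in> R \<longrightarrow> Z (k, i) (l, j) = Mf (k, i) (l, j)"
    using completion[OF tol ch, of "{1..n}" m Mf] pc by auto
  define N where "N k l i j = (if k < m \<and> l < m \<and> i \<in> {1..n} \<and> j \<in> {1..n} \<and> (i, j) \<notin> R then Z (k, i) (l, j) else 0)"
    for k l i j
  have NE: "N \<in> Mm_Eperp n R m" unfolding Mm_Eperp_def N_def by auto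
  have "psd_on ({..<m} \<times> {1..n}) (\<lambda>(k, i) (l, j). M k l i j + N k l i j)"
    using Z(1)
  proof (rule psd_cong)
    fix x y assume xy: "x \<in> {..<m} \<times> {1..n}" "y \<in> {..<m} \<times> {1..n}"
    then obtain k i l j where kl: "x = (k, i)" "y = (l, j)" "k < m" "l < m" "i \<in> {1..n}" "j \<in> {1..n}" by auto
    show "Z x y = (\<lambda>(k, i) (l, j). M k l i j + N k l i j) x y"
    proof (cases "(i, j) \<in> R")
      case True
      then show ?thesis using Z(2) kl unfolding N_def Mf_def by auto
    next
      case False
      then have "M k l i j = 0" using M unfolding Mm_E_def by blast
      then show ?thesis using False kl unfolding N_def by auto
    qed
  qed
  then show "dual_pos n R m M" unfolding dual_pos_def using M NE by blast
qed

theorem mainTheorem2: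
  fixes n :: nat and R :: "(nat \<times> nat) set"
  assumes "tolerance_relation n R"
    and "chordal n R"
  shows "\<forall>m. inj_on (Phi_m n R m) (Mm_E n R m) \<and>
           (\<forall>M \<in> Mm_E n R m. dual_pos n R m M \<longleftrightarrow> dsum_pos n R m (Phi_m n R m M))"
  using inj_part[OF assms(1)] dual_iff[OF assms] dsum_iff by blast

end
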